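(* Let $(\Omega,\mathcal F)$ be a measurable space, $\mathcal X$ the set of bounded measurable functions, and $v$ a binary capacity with null set $\mathcal C_v=\{A\in\mathcal F: v(A)=0\}$. Then the Choquet integral $I_v:\mathcal X\to\mathbb R$ is convex (i.e. $I_v(\lambda X+(1-\lambda)Y)\le\lambda I_v(X)+(1-\lambda)I_v(Y)$ for all $\lambda\in[0,1]$, $X,Y\in\mathcal X$) if and only if $\mathcal C_v$ is closed under union (i.e. $A,B\in\mathcal C_v$ implies $A\cup B\in\mathcal C_v$).
   Context: A binary capacity is an increasing function $v:\mathcal F\to\{0,1\}$ (i.e. $v(A)\le v(B)$ for $A\subseteq B$) with $v(\varnothing)=0$, $v(\Omega)=1$. $I_v(X)=\int_{-\infty}^0(v(X\ge x)-1)\,\mathrm dx+\int_0^\infty v(X\ge x)\,\mathrm dx$. *)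

theory Defs
  imports "HOL-Analysis.Analysis"
begin

definition binary_capacity :: "'a measure \<Rightarrow> ('a set \<Rightarrow> real) \<Rightarrow> bool" where
  "binary_capacity M v \<longleftrightarrow>
     (\<forall>A\<in>sets M. v A \<in> {0, 1}) \<and>
     (\<forall>A\<in>sets M. \<forall>B\<in>sets M. A \<subseteq> B \<longrightarrow> v A \<le> v B) \<and>
     v {} = 0 \<and> v (space M) = 1"

definition bounded_measurable :: "'a measure \<Rightarrow> ('a \<Rightarrow> real) \<Rightarrow> bool" where
  "bounded_measurable M X \<longleftrightarrow> X \<in> borel_measurable M \<and> bounded (X ` space M)"

definition choquet :: "'a measure \<Rightarrow> ('a set \<Rightarrow> real) \<Rightarrow> ('a \<Rightarrow> real) \<Rightarrow> real" where
  "choquet M v X =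
     (LBINT x:{..0::real}. v {\<omega>\<in>space M. x \<le> X \<omega>} - 1) +
     (LBINT x:{0::real..}. v {\<omega>\<in>space M. x \<le> X \<omega>})"

end

theory Submission imports Defs begin
lemma thresh_integral:
  fixes f :: "real \<Rightarrow> real"
  assumes f1: "\<And>x. x < c \<Longrightarrow> f x = 1" and f0: "\<And>x. x > c \<Longrightarrow> f x = 0"
  shows "(LBINT x:{..0::real}. f x - 1) + (LBINT x:{0::real..}. f x) = c"
proof -
  have feq: "f = (\<lambda>x. if x < c then 1 else if x = c then f c else 0)"
    using f1 f0 by (auto simp: fun_eq_iff)
  have m[measurable]: "f \<in> borel_measurable borel"
    by (subst feq) measurable
  have ae: "AE x in lborel. x \<noteq> c" by (rule AE_lborel_singleton)
  have "(LBINT x:{..0::real}. f x - 1) = (LBINT x:{..0::real}. - indicator {min c 0<..0} x)"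
  proof (rule set_lebesgue_integral_cong_AE)
    show "AE x\<in>{..0} in lborel. f x - 1 = - indicator {min c 0<..0} x"
    proof (rule eventually_mono[OF ae], intro impI)
      fix x :: real assume "x \<noteq> c" "x \<in> {..0}"
      then show "f x - 1 = - indicator {min c 0<..0} x"
        by (cases "x < c") (auto simp: f1 f0 indicator_def)
    qed
  qed auto
  also have "\<dots> = - measure lborel {min c 0<..0}"
  proof -
    have "(\<lambda>x. indicator {..0::real} x *\<^sub>R - indicator {min c 0<..0} x) = (\<lambda>x. - indicator {min c 0<..0} x :: real)"
      by (auto simp: indicator_def fun_eq_iff)
    then show ?thesis unfolding set_lebesgue_integral_def by simp
  qed
  finally have 1: "(LBINT x:{..0::real}. f x - 1) = - measure lborel {min c 0<..0}" .
  have "(LBINT x:{0::real..}. f x) = (LBINT x:{0::real..}. indicator {0..<max c 0} x)"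
  proof (rule set_lebesgue_integral_cong_AE)
    show "AE x\<in>{0..} in lborel. f x = indicator {0..<max c 0} x"
    proof (rule eventually_mono[OF ae], intro impI)
      fix x :: real assume "x \<noteq> c" "x \<in> {0..}"
      then show "f x = indicator {0..<max c 0} x"
        by (cases "x < c") (auto simp: f1 f0 indicator_def)
    qed
  qed auto
  also have "\<dots> = measure lborel {0..<max c 0}"
  proof -
    have "(\<lambda>x. indicator {0::real..} x *\<^sub>R indicator {0..<max c 0} x) = (\<lambda>x. indicator {0..<max c 0} x :: real)"
      by (auto simp: indicator_def fun_eq_iff)
    then show ?thesis unfolding set_lebesgue_integral_def by simp
  qed
  finally have 2: "(LBINT x:{0::real..}. f x) = measure lborel {0..<max c 0}" .
  show ?thesis unfolding 1 2 by simp
qed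

lemma choquet_thresh:
  assumes bc: "binary_capacity M v" and bm: "bounded_measurable M X"
  shows "\<exists>c. choquet M v X = c \<and> (\<forall>x<c. v {\<omega>\<in>space M. x \<le> X \<omega>} = 1)
           \<and> (\<forall>x>c. v {\<omega>\<in>space M. x \<le> X \<omega>} = 0)"
proof -
  have Xm[measurable]: "X \<in> borel_measurable M" using bm by (simp add: bounded_measurable_def)
  obtain K where K: "\<And>\<omega>. \<omega> \<in> space M \<Longrightarrow> \<bar>X \<omega>\<bar> \<le> K"
    using bm unfolding bounded_measurable_def bounded_real by auto
  have vals: "\<And>A. A \<in> sets M \<Longrightarrow> v A = 0 \<or> v A = 1"
    and mono: "\<And>A B. A \<in> sets M \<Longrightarrow> B \<in> sets M \<Longrightarrow> A \<subseteq> B \<Longrightarrow> v A \<le> v B"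
    and v0: "v {} = 0" and v1: "v (space M) = 1"
    using bc unfolding binary_capacity_def by auto
  have ms: "\<And>x. {\<omega>\<in>space M. x \<le> X \<omega>} \<in> sets M" by measurable
  define S where "S = {x. v {\<omega>\<in>space M. x \<le> X \<omega>} = 1}"
  have "-K \<in> S"
  proof -
    have "-K \<le> X \<omega>" if "\<omega> \<in> space M" for \<omega> using K[OF that] by linarith
    then have "{\<omega>\<in>space M. -K \<le> X \<omega>} = space M" by auto
    then show ?thesis using v1 by (simp add: S_def)
  qed
  then have ne: "S \<noteq> {}" by auto
  have ub: "\<And>x. x \<in> S \<Longrightarrow> x \<le> K"
  proof (rule ccontr)
    fix x assume "x \<in> S" "\<not> x \<le> K"
    then have eq: "{\<omega>\<in>space M. x \<le> X \<omega>} = {}" using K by (force simp: abs_le_iff)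
    have "v {\<omega>\<in>space M. x \<le> X \<omega>} = v {}" by (simp only: eq)
    then show False using \<open>x \<in> S\<close> v0 by (simp add: S_def)
  qed
  then have bdd: "bdd_above S" by (auto simp: bdd_above_def)
  define c where "c = Sup S"
  have lo: "v {\<omega>\<in>space M. x \<le> X \<omega>} = 1" if "x < c" for x
  proof -
    obtain y where y: "y \<in> S" "x < y" using \<open>x < c\<close> ne bdd unfolding c_def by (auto simp: less_cSup_iff)
    have "{\<omega>\<in>space M. y \<le> X \<omega>} \<subseteq> {\<omega>\<in>space M. x \<le> X \<omega>}" using y by auto
    then have "v {\<omega>\<in>space M. y \<le> X \<omega>} \<le> v {\<omega>\<in>space M. x \<le> X \<omega>}" by (rule mono[OF ms ms])
    then show ?thesis using y vals[OF ms, of x] by (auto simp: S_def)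
  qed
  have hi: "v {\<omega>\<in>space M. x \<le> X \<omega>} = 0" if "x > c" for x
  proof -
    have "x \<notin> S" using that cSup_upper[OF _ bdd] unfolding c_def by force
    then show ?thesis using vals[OF ms, of x] by (auto simp: S_def)
  qed
  have "choquet M v X = c"
    unfolding choquet_def by (rule thresh_integral[of c]) (auto simp: lo hi)
  then show ?thesis using lo hi by blast
qed

lemma choquet_le:
  assumes "binary_capacity M v" "bounded_measurable M X"
    and "\<And>x. x > d \<Longrightarrow> v {\<omega>\<in>space M. x \<le> X \<omega>} = 0"
  shows "choquet M v X \<le> d"
proof -
  obtain c where c: "choquet M v X = c" "\<forall>x<c. v {\<omega>\<in>space M. x \<le> X \<omega>} = 1"
    using choquet_thresh[OF assms(1,2)] by blast
  show ?thesis
  proof (rule ccontr)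
    assume "\<not> choquet M v X \<le> d"
    define m where "m = (d + c) / 2"
    have "d < m" "m < c" using c \<open>\<not> choquet M v X \<le> d\<close> by (auto simp: m_def)
    then have "v {\<omega>\<in>space M. m \<le> X \<omega>} = 0" "v {\<omega>\<in>space M. m \<le> X \<omega>} = 1"
      using assms(3) c(2) by auto
    then show False by simp
  qed
qed

lemma choquet_ge:
  assumes "binary_capacity M v" "bounded_measurable M X"
    and "\<And>x. x < d \<Longrightarrow> v {\<omega>\<in>space M. x \<le> X \<omega>} = 1"
  shows "choquet M v X \<ge> d"
proof -
  obtain c where c: "choquet M v X = c" "\<forall>x>c. v {\<omega>\<in>space M. x \<le> X \<omega>} = 0"
    using choquet_thresh[OF assms(1,2)] by blast
  show ?thesis
  proof (rule ccontr)
    assume "\<not> choquet M v X \<ge> d"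
    define m where "m = (d + c) / 2"
    have "c < m" "m < d" using c \<open>\<not> choquet M v X \<ge> d\<close> by (auto simp: m_def)
    then have "v {\<omega>\<in>space M. m \<le> X \<omega>} = 0" "v {\<omega>\<in>space M. m \<le> X \<omega>} = 1"
      using assms(3) c(2) by auto
    then show False by simp
  qed
qed


lemma bm_comb:
  assumes "bounded_measurable M X" "bounded_measurable M Y" "0 \<le> l" "l \<le> 1"
  shows "bounded_measurable M (\<lambda>\<omega>. l * X \<omega> + (1 - l) * Y \<omega>)"
proof -
  have [measurable]: "X \<in> borel_measurable M" "Y \<in> borel_measurable M"
    using assms by (auto simp: bounded_measurable_def)
  obtain K1 where K1: "\<And>\<omega>. \<omega> \<in> space M \<Longrightarrow> \<bar>X \<omega>\<bar> \<le> K1"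
    using assms unfolding bounded_measurable_def bounded_real by auto
  obtain K2 where K2: "\<And>\<omega>. \<omega> \<in> space M \<Longrightarrow> \<bar>Y \<omega>\<bar> \<le> K2"
    using assms unfolding bounded_measurable_def bounded_real by auto
  have "\<bar>l * X \<omega> + (1 - l) * Y \<omega>\<bar> \<le> l * K1 + (1 - l) * K2" if "\<omega> \<in> space M" for \<omega>
  proof -
    have "\<bar>l * X \<omega>\<bar> \<le> l * K1" using K1[OF that] assms(3) by (simp add: abs_mult mult_left_mono)
    moreover have "\<bar>(1 - l) * Y \<omega>\<bar> \<le> (1 - l) * K2" using K2[OF that] assms(4) by (simp add: abs_mult mult_left_mono)
    ultimately show ?thesis by linarith
  qed
  then show ?thesis unfolding bounded_measurable_def bounded_real by auto
qed

theorem proposition4: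
  fixes M :: "'a measure" and v :: "'a set \<Rightarrow> real"
  assumes "binary_capacity M v"
  shows "(\<forall>l::real. \<forall>X Y. 0 \<le> l \<and> l \<le> 1 \<and> bounded_measurable M X \<and> bounded_measurable M Y \<longrightarrow>
            choquet M v (\<lambda>\<omega>. l * X \<omega> + (1 - l) * Y \<omega>)
              \<le> l * choquet M v X + (1 - l) * choquet M v Y)
         \<longleftrightarrow>
         (\<forall>A\<in>sets M. \<forall>B\<in>sets M. v A = 0 \<and> v B = 0 \<longrightarrow> v (A \<union> B) = 0)"
proof -
  note bc = assms
  have vals: "\<And>A. A \<in> sets M \<Longrightarrow> v A = 0 \<or> v A = 1"
    and mono: "\<And>A B. A \<in> sets M \<Longrightarrow> B \<in> sets M \<Longrightarrow> A \<subseteq> B \<Longrightarrow> v A \<le> v B"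
    using bc unfolding binary_capacity_def by auto
  show ?thesis
  proof
    assume conv: "\<forall>l::real. \<forall>X Y. 0 \<le> l \<and> l \<le> 1 \<and> bounded_measurable M X \<and> bounded_measurable M Y \<longrightarrow>
            choquet M v (\<lambda>\<omega>. l * X \<omega> + (1 - l) * Y \<omega>)
              \<le> l * choquet M v X + (1 - l) * choquet M v Y"
    show "\<forall>A\<in>sets M. \<forall>B\<in>sets M. v A = 0 \<and> v B = 0 \<longrightarrow> v (A \<union> B) = 0"
    proof (intro ballI impI)
      fix A B assume A[measurable]: "A \<in> sets M" and B[measurable]: "B \<in> sets M" and vAB: "v A = 0 \<and> v B = 0"
      have bmI: "bounded_measurable M (\<lambda>\<omega>. 2 * indicator C \<omega>)" if [measurable]: "C \<in> sets M" for C
      proof -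
        have "(\<lambda>\<omega>. 2 * indicator C \<omega>) ` space M \<subseteq> {0, 2::real}" by (auto simp: indicator_def)
        then have "bounded ((\<lambda>\<omega>. 2 * indicator C \<omega>) ` space M :: real set)"
          by (rule bounded_subset[OF finite_imp_bounded, rotated]) simp
        then show ?thesis unfolding bounded_measurable_def by simp
      qed
      have le0: "choquet M v (\<lambda>\<omega>. 2 * indicator C \<omega>) \<le> 0" if C: "C \<in> sets M" "v C = 0" for C
      proof (rule choquet_le[OF bc bmI[OF C(1)]])
        fix x :: real assume "x > 0"
        have ms: "{\<omega>\<in>space M. x \<le> 2 * indicator C \<omega>} \<in> sets M" using C(1) by measurable
        have "{\<omega>\<in>space M. x \<le> 2 * indicator C \<omega>} \<subseteq> C" using \<open>x > 0\<close> by (auto simp: indicator_def)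
        then have "v {\<omega>\<in>space M. x \<le> 2 * indicator C \<omega>} \<le> v C" by (rule mono[OF ms C(1)])
        then show "v {\<omega>\<in>space M. x \<le> 2 * indicator C \<omega>} = 0" using vals[OF ms] C(2) by auto
      qed
      show "v (A \<union> B) = 0"
      proof (rule ccontr)
        assume "v (A \<union> B) \<noteq> 0"
        then have v1: "v (A \<union> B) = 1" using vals[of "A \<union> B"] by auto
        let ?Z = "\<lambda>\<omega>. (1/2) * (2 * indicator A \<omega>) + (1 - 1/2) * (2 * indicator B \<omega>) :: real"
        have ge1: "choquet M v ?Z \<ge> 1"
        proof (rule choquet_ge[OF bc bm_comb[OF bmI[OF A] bmI[OF B]]])
          fix x :: real assume "x < 1"
          have ms: "{\<omega>\<in>space M. x \<le> ?Z \<omega>} \<in> sets M" by measurable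
          have "A \<union> B \<subseteq> space M" using sets.sets_into_space[OF A] sets.sets_into_space[OF B] by auto
          then have "A \<union> B \<subseteq> {\<omega>\<in>space M. x \<le> ?Z \<omega>}" using \<open>x < 1\<close> by (auto simp: indicator_def)
          then have "v (A \<union> B) \<le> v {\<omega>\<in>space M. x \<le> ?Z \<omega>}" using mono[OF sets.Un[OF A B] ms] by blast
          then show "v {\<omega>\<in>space M. x \<le> ?Z \<omega>} = 1" using vals[OF ms] v1 by auto
        qed simp_all
        have "choquet M v ?Z \<le> (1/2) * choquet M v (\<lambda>\<omega>. 2 * indicator A \<omega>) + (1 - 1/2) * choquet M v (\<lambda>\<omega>. 2 * indicator B \<omega>)"
          by (rule conv[rule_format]) (simp add: bmI[OF A] bmI[OF B])
        moreover have "choquet M v (\<lambda>\<omega>. 2 * indicator A \<omega>) \<le> 0" using le0 A vAB by auto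
        moreover have "choquet M v (\<lambda>\<omega>. 2 * indicator B \<omega>) \<le> 0" using le0 B vAB by auto
        moreover note ge1
        moreover have key: "z \<le> 1/2*a + (1-1/2)*b \<Longrightarrow> a \<le> 0 \<Longrightarrow> b \<le> 0 \<Longrightarrow> 1 \<le> z \<Longrightarrow> False"
          for z a b :: real by simp
        ultimately show False by blast
      qed
    qed
  next
    assume cl: "\<forall>A\<in>sets M. \<forall>B\<in>sets M. v A = 0 \<and> v B = 0 \<longrightarrow> v (A \<union> B) = 0"
    show "\<forall>l::real. \<forall>X Y. 0 \<le> l \<and> l \<le> 1 \<and> bounded_measurable M X \<and> bounded_measurable M Y \<longrightarrow>
            choquet M v (\<lambda>\<omega>. l * X \<omega> + (1 - l) * Y \<omega>)
              \<le> l * choquet M v X + (1 - l) * choquet M v Y"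
    proof (intro allI impI)
      fix l :: real and X Y
      assume H: "0 \<le> l \<and> l \<le> 1 \<and> bounded_measurable M X \<and> bounded_measurable M Y"
      then have l: "0 \<le> l" "l \<le> 1" and bX: "bounded_measurable M X" and bY: "bounded_measurable M Y" by auto
      have [measurable]: "X \<in> borel_measurable M" "Y \<in> borel_measurable M"
        using bX bY by (auto simp: bounded_measurable_def)
      obtain a where a: "choquet M v X = a" "\<forall>x>a. v {\<omega>\<in>space M. x \<le> X \<omega>} = 0"
        using choquet_thresh[OF bc bX] by blast
      obtain b where b: "choquet M v Y = b" "\<forall>x>b. v {\<omega>\<in>space M. x \<le> Y \<omega>} = 0"
        using choquet_thresh[OF bc bY] by blast
      show "choquet M v (\<lambda>\<omega>. l * X \<omega> + (1 - l) * Y \<omega>) \<le> l * choquet M v X + (1 - l) * choquet M v Y"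
        unfolding a(1) b(1)
      proof (rule choquet_le[OF bc bm_comb[OF bX bY l]])
        fix t assume t: "t > l * a + (1 - l) * b"
        define e where "e = t - (l * a + (1 - l) * b)"
        have e: "e > 0" using t by (simp add: e_def)
        have msX: "{\<omega>\<in>space M. a + e \<le> X \<omega>} \<in> sets M" by measurable
        have msY: "{\<omega>\<in>space M. b + e \<le> Y \<omega>} \<in> sets M" by measurable
        have ms: "{\<omega>\<in>space M. t \<le> l * X \<omega> + (1 - l) * Y \<omega>} \<in> sets M" by measurable
        have sub: "{\<omega>\<in>space M. t \<le> l * X \<omega> + (1 - l) * Y \<omega>} \<subseteq>
            {\<omega>\<in>space M. a + e \<le> X \<omega>} \<union> {\<omega>\<in>space M. b + e \<le> Y \<omega>}"
        proof (rule subsetI, rule ccontr)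
          fix \<omega> assume w: "\<omega> \<in> {\<omega>\<in>space M. t \<le> l * X \<omega> + (1 - l) * Y \<omega>}"
            and nw: "\<omega> \<notin> {\<omega>\<in>space M. a + e \<le> X \<omega>} \<union> {\<omega>\<in>space M. b + e \<le> Y \<omega>}"
          then have x: "X \<omega> < a + e" and y: "Y \<omega> < b + e" and tw: "t \<le> l * X \<omega> + (1 - l) * Y \<omega>" by auto
          have teq: "t = l * (a + e) + (1 - l) * (b + e)" by (simp add: e_def algebra_simps)
          show False
          proof (cases "l = 0")
            case True then show ?thesis using tw teq y by simp
          next
            case False
            then have "l * X \<omega> < l * (a + e)" using l x by (simp add: mult_strict_left_mono)
            moreover have "(1 - l) * Y \<omega> \<le> (1 - l) * (b + e)" using l y by (simp add: mult_left_mono)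
            ultimately show ?thesis using tw teq by linarith
          qed
        qed
        have "v {\<omega>\<in>space M. a + e \<le> X \<omega>} = 0" using a(2) e by auto
        moreover have "v {\<omega>\<in>space M. b + e \<le> Y \<omega>} = 0" using b(2) e by auto
        ultimately have "v ({\<omega>\<in>space M. a + e \<le> X \<omega>} \<union> {\<omega>\<in>space M. b + e \<le> Y \<omega>}) = 0"
          using cl msX msY by blast
        moreover have "v {\<omega>\<in>space M. t \<le> l * X \<omega> + (1 - l) * Y \<omega>} \<le> v ({\<omega>\<in>space M. a + e \<le> X \<omega>} \<union> {\<omega>\<in>space M. b + e \<le> Y \<omega>})"
          by (rule mono[OF ms _ sub]) (use msX msY in auto)
        ultimately show "v {\<omega>\<in>space M. t \<le> l * X \<omega> + (1 - l) * Y \<omega>} = 0" using vals[OF ms] by auto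
      qed
    qed
  qed
qed

end
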